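(* Let $G\subset E'$ be a separating linear subspace, let $(T^{E}_{m},T^{\mathbb{K}}_{m})_{m\in\mathcal{M}}$ be a strong, consistent family for $(\mathcal{FV},E)$, and let $U$ be a set of uniqueness for $\mathcal{FV}(\Omega)$. Then the restriction map \[ R_{U,G}\colon S(\mathcal{FV}(\Omega)\varepsilon E)\to \mathcal{FV}_{G}(U,E),\quad f\mapsto (T^{E}_{m}(f)(x))_{(m,x)\in U}, \] is injective.
   Context: $\mathbb{K}\in\{\mathbb{R},\mathbb{C}\}$; $E$ is a non-trivial locally convex Hausdorff space (lcHs) over $\mathbb{K}$ with a directed fundamental system of seminorms $(p_\alpha)_{\alpha\in\mathfrak{A}}$ (for $E=\mathbb{K}$ the system is $\{|\cdot|\}$); $E'$ is its topological dual. A linear subspace $G\subset E'$ is separating if $e'(x)=0$ for all $e'\in G$ implies $x=0$. Weighted function spaces: Let $\Omega,J,L$ be non-empty sets, $(M_l)_{l\in L}$ non-empty sets and $\mathcal{V}=((\nu_{j,l,m})_{m\in M_l})_{j\in J,l\in L}$ functions $\nu_{j,l,m}\colon\Omega\to[0,\infty)$ such that for all $x\in\Omega$, $l\in L$ there is $j\in J$ with $\nu_{j,l,m}(x)>0$ for all $m\in M_l$. Let $\mathcal{M}_{\mathrm{top}}:=\bigcup_{l}M_l$ and $\mathcal{M}_0,\mathcal{M}_r$ sets such that the three are pairwise disjoint; $\mathcal{M}:=\mathcal{M}_{\mathrm{top}}\cup\mathcal{M}_0\cup\mathcal{M}_r$. Let $(\omega_m)_{m\in\mathcal{M}}$ be non-empty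 sets with $\Omega\subset\omega_m$ for $m\in\mathcal{M}_{\mathrm{top}}$. For $F\in\{E,\mathbb{K}\}$ let $T^{F}_m\colon \operatorname{dom}T^F_m\subset F^\Omega\to F^{\omega_m}$ be linear maps, $m\in\mathcal{M}$. Put $W(\Omega,F):=\bigcap_{m\in\mathcal{M}}\operatorname{dom}T^F_m\cap\bigcap_{m\in\mathcal{M}_0}\ker T^F_m$ and $\mathcal{FV}(\Omega,F):=\{f\in W(\Omega,F): |f|_{j,l,\alpha}<\infty\ \forall j\in J,l\in L,\alpha\}$ where $|f|_{j,l,\alpha}:=\sup_{x\in\Omega,m\in M_l}p_\alpha(T^F_m(f)(x))\nu_{j,l,m}(x)$, topologised by these seminorms; $\mathcal{FV}(\Omega):=\mathcal{FV}(\Omega,\mathbb{K})$ with seminorms $|f|_{j,l}$. Write $T^F_{m,x}(f):=T^F_m(f)(x)$. Such a space is a dom-space if its system of seminorms is directed and, in the scalar case, all point evaluations $\delta_x\colon f\mapsto f(x)$, $x\in\Omega$, are continuous on $\mathcal{FV}(\Omega)$. $\mathcal{FV}(\Omega)\varepsilon E$ is the space of continuous linear maps $\mathcal{FV}(\Omega)'_\kappa\to E$ ($\kappa$: topology of uniform convergence on absolutely convex compact subsets of $\mathcal{FV}(\Omega)$) with the topology of uniform convergence on equicontinuous sets; $S\colon \mathcal{FV}(\Omega)\varepsilon E\to E^\Omega$, $S(u)(x):=u(\delta_x)$. If $\mathcal{FV}(\Omega)$ and $\mathcal{FV}(\Omega,E)$ are dom-spaces built with the same data $\Omega,\mathcal{V},\mathcal{M}_{\mathrm{top}},\mathcal{M}_0,\mathcal{M}_r,(\omega_m)$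 and operators $T^{\mathbb{K}}_m$ resp. $T^E_m$, then $(T^E_m,T^{\mathbb{K}}_m)_{m\in\mathcal{M}}$ is a defining family for $(\mathcal{FV},E)$. It is consistent if for all $u\in\mathcal{FV}(\Omega)\varepsilon E$, $m\in\mathcal{M}$, $x\in\omega_m$: $S(u)\in\operatorname{dom}T^E_m$, the restriction of $T^{\mathbb{K}}_{m,x}$ to $\mathcal{FV}(\Omega)$ lies in $\mathcal{FV}(\Omega)'$, and $T^E_m(S(u))(x)=u(T^{\mathbb{K}}_{m,x})$. It is strong if for all $e'\in E'$, $f\in\mathcal{FV}(\Omega,E)$, $m\in\mathcal{M}$: $e'\circ f\in\operatorname{dom}T^{\mathbb{K}}_m$ and $T^{\mathbb{K}}_m(e'\circ f)=e'\circ T^E_m(f)$ on $\omega_m$. A set $U\subset\bigcup_{m\in\mathcal{M}}\{m\}\times\omega_m$ is a set of uniqueness for $\mathcal{FV}(\Omega)$ if $T^{\mathbb{K}}_{m,x}\in\mathcal{FV}(\Omega)'$ for all $(m,x)\in U$ and every $f\in\mathcal{FV}(\Omega)$ with $T^{\mathbb{K}}_m(f)(x)=0$ for all $(m,x)\in U$ is $0$. For separating $G\subset E'$, $\mathcal{FV}_G(U,E)$ is the set of $f\colon U\to E$ such that for every $e'\in G$ there is (a necessarily unique) $f_{e'}\in\mathcal{FV}(\Omega)$ with $T^{\mathbb{K}}_m(f_{e'})(x)=e'(f(m,x))$ for all $(m,x)\in U$. For strong consistent families the map $R_{U,G}$ in the claim takes values in $\mathcal{FV}_G(U,E)$. *)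

theory Defs
  imports "HOL-Analysis.Analysis" "HOL-Library.Function_Algebras"
begin

definition semtop :: "('i \<Rightarrow> 'v::ab_group_add \<Rightarrow> real) \<Rightarrow> 'i set \<Rightarrow> 'v set \<Rightarrow> 'v topology" where
  "semtop q I X = topology (\<lambda>S. S \<subseteq> X \<and> (\<forall>x\<in>S. \<exists>F e. finite F \<and> F \<subseteq> I \<and> 0 < e \<and>
       {y\<in>X. \<forall>i\<in>F. q i (y - x) < e} \<subseteq> S))"

lemma istopology_semtop:
  "istopology (\<lambda>S. S \<subseteq> X \<and> (\<forall>x\<in>S. \<exists>F e. finite F \<and> F \<subseteq> I \<and> 0 < (e::real) \<and>
       {y\<in>X. \<forall>i\<in>F. q i (y - x) < e} \<subseteq> S))"
  unfolding istopology_def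
proof (rule conjI; intro allI impI)
  fix S T
  assume S: "S \<subseteq> X \<and> (\<forall>x\<in>S. \<exists>F e. finite F \<and> F \<subseteq> I \<and> 0 < e \<and> {y\<in>X. \<forall>i\<in>F. q i (y - x) < e} \<subseteq> S)"
     and T: "T \<subseteq> X \<and> (\<forall>x\<in>T. \<exists>F e. finite F \<and> F \<subseteq> I \<and> 0 < e \<and> {y\<in>X. \<forall>i\<in>F. q i (y - x) < e} \<subseteq> T)"
  show "S \<inter> T \<subseteq> X \<and> (\<forall>x\<in>S \<inter> T. \<exists>F e. finite F \<and> F \<subseteq> I \<and> 0 < e \<and> {y\<in>X. \<forall>i\<in>F. q i (y - x) < e} \<subseteq> S \<inter> T)"
  proof (intro conjI ballI)
    show "S \<inter> T \<subseteq> X" using S by blast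
  next
    fix x assume x: "x \<in> S \<inter> T"
    obtain F1 e1 where 1: "finite F1" "F1 \<subseteq> I" "0 < e1" "{y\<in>X. \<forall>i\<in>F1. q i (y - x) < e1} \<subseteq> S"
      using S x by blast
    obtain F2 e2 where 2: "finite F2" "F2 \<subseteq> I" "0 < e2" "{y\<in>X. \<forall>i\<in>F2. q i (y - x) < e2} \<subseteq> T"
      using T x by blast
    have "{y\<in>X. \<forall>i\<in>F1 \<union> F2. q i (y - x) < min e1 e2} \<subseteq> S \<inter> T"
      using 1(4) 2(4) by auto
    then show "\<exists>F e. finite F \<and> F \<subseteq> I \<and> 0 < e \<and> {y\<in>X. \<forall>i\<in>F. q i (y - x) < e} \<subseteq> S \<inter> T"
      using 1 2 by (intro exI[of _ "F1 \<union> F2"] exI[of _ "min e1 e2"]) auto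
  qed
next
  fix K :: "'a set set"
  assume K: "\<forall>S\<in>K. S \<subseteq> X \<and> (\<forall>x\<in>S. \<exists>F e. finite F \<and> F \<subseteq> I \<and> 0 < e \<and> {y\<in>X. \<forall>i\<in>F. q i (y - x) < e} \<subseteq> S)"
  show "\<Union>K \<subseteq> X \<and> (\<forall>x\<in>\<Union>K. \<exists>F e. finite F \<and> F \<subseteq> I \<and> 0 < e \<and> {y\<in>X. \<forall>i\<in>F. q i (y - x) < e} \<subseteq> \<Union>K)"
  proof (intro conjI ballI)
    show "\<Union>K \<subseteq> X" using K by blast
  next
    fix x assume "x \<in> \<Union>K"
    then obtain S where "S \<in> K" "x \<in> S" by blast
    have H: "\<exists>F e. finite F \<and> F \<subseteq> I \<and> 0 < e \<and> {y\<in>X. \<forall>i\<in>F. q i (y - x) < e} \<subseteq> S"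
      by (rule bspec[OF conjunct2[OF bspec[OF K \<open>S \<in> K\<close>]] \<open>x \<in> S\<close>])
    then obtain F e where FE: "finite F" "F \<subseteq> I" "0 < e" "{y\<in>X. \<forall>i\<in>F. q i (y - x) < e} \<subseteq> S"
      by (elim exE conjE)
    have "{y\<in>X. \<forall>i\<in>F. q i (y - x) < e} \<subseteq> \<Union>K" using FE(4) \<open>S \<in> K\<close> by (rule subset_trans[OF _ Union_upper])
    then show "\<exists>F e. finite F \<and> F \<subseteq> I \<and> 0 < e \<and> {y\<in>X. \<forall>i\<in>F. q i (y - x) < e} \<subseteq> \<Union>K"
      using FE(1-3) by blast
  qed
qed

definition is_seminorm :: "('k::real_normed_field \<Rightarrow> 'v \<Rightarrow> 'v) \<Rightarrow> ('v::ab_group_add \<Rightarrow> real) \<Rightarrow> bool" where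
  "is_seminorm sc q \<longleftrightarrow> (\<forall>x. 0 \<le> q x) \<and> (\<forall>c x. q (sc c x) = norm c * q x) \<and> (\<forall>x y. q (x + y) \<le> q x + q y)"

definition directed_on :: "('i \<Rightarrow> 'v \<Rightarrow> real) \<Rightarrow> 'i set \<Rightarrow> 'v set \<Rightarrow> bool" where
  "directed_on q I X \<longleftrightarrow> (\<forall>i1\<in>I. \<forall>i2\<in>I. \<exists>i3\<in>I. \<exists>C>0. \<forall>x\<in>X. q i1 x \<le> C * q i3 x \<and> q i2 x \<le> C * q i3 x)"

text \<open>Non-trivial locally convex Hausdorff space E (carrier: the whole type 'e) over the scalar
  field 'k, with the directed fundamental system of seminorms p a, a in A.\<close>
definition lcHs :: "('k::real_normed_field \<Rightarrow> 'e::ab_group_add \<Rightarrow> 'e) \<Rightarrow> ('a \<Rightarrow> 'e \<Rightarrow> real) \<Rightarrow> 'a set \<Rightarrow> bool" where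
  "lcHs sc p A \<longleftrightarrow> Vector_Spaces.vector_space sc \<and> A \<noteq> {} \<and> (\<forall>a\<in>A. is_seminorm sc (p a)) \<and>
     directed_on p A UNIV \<and> (\<forall>x. x \<noteq> 0 \<longrightarrow> (\<exists>a\<in>A. p a x \<noteq> 0)) \<and> (\<exists>x::'e. x \<noteq> 0)"

definition dualsp :: "('k::real_normed_field \<Rightarrow> 'e::ab_group_add \<Rightarrow> 'e) \<Rightarrow> ('a \<Rightarrow> 'e \<Rightarrow> real) \<Rightarrow> 'a set \<Rightarrow> ('e \<Rightarrow> 'k) set" where
  "dualsp sc p A = {e'. Vector_Spaces.linear sc (*) e' \<and> continuous_map (semtop p A UNIV) euclidean e'}"

definition fsc :: "('k \<Rightarrow> 'f \<Rightarrow> 'f) \<Rightarrow> 'k \<Rightarrow> ('o \<Rightarrow> 'f) \<Rightarrow> ('o \<Rightarrow> 'f)" where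
  "fsc sc c f = (\<lambda>x. sc c (f x))"

definition lin_op :: "('k \<Rightarrow> 'f::ab_group_add \<Rightarrow> 'f) \<Rightarrow> ('o \<Rightarrow> 'f) set \<Rightarrow> 'w set \<Rightarrow> (('o \<Rightarrow> 'f) \<Rightarrow> 'w \<Rightarrow> 'f) \<Rightarrow> bool" where
  "lin_op sc D om T \<longleftrightarrow> (\<lambda>_. 0) \<in> D \<and> (\<forall>f\<in>D. \<forall>g\<in>D. \<forall>a b. fsc sc a f + fsc sc b g \<in> D \<and>
      (\<forall>x\<in>om. T (fsc sc a f + fsc sc b g) x = sc a (T f x) + sc b (T g x)))"

definition lin_fun_on :: "('k \<Rightarrow> 'v::plus \<Rightarrow> 'v) \<Rightarrow> ('k \<Rightarrow> 'u::plus \<Rightarrow> 'u) \<Rightarrow> 'v set \<Rightarrow> ('v \<Rightarrow> 'u) \<Rightarrow> bool" where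
  "lin_fun_on sc1 sc2 X phi \<longleftrightarrow> (\<forall>x\<in>X. \<forall>y\<in>X. \<forall>a b. phi (sc1 a x + sc1 b y) = sc2 a (phi x) + sc2 b (phi y))"

definition Wsp :: "'m set \<Rightarrow> 'm set \<Rightarrow> ('m \<Rightarrow> 'w set) \<Rightarrow> ('m \<Rightarrow> ('o \<Rightarrow> 'f) set) \<Rightarrow> ('m \<Rightarrow> ('o \<Rightarrow> 'f) \<Rightarrow> 'w \<Rightarrow> 'f::zero) \<Rightarrow> ('o \<Rightarrow> 'f) set" where
  "Wsp MM M0 om D T = {f. (\<forall>m\<in>MM. f \<in> D m) \<and> (\<forall>m\<in>M0. \<forall>x\<in>om m. T m f x = 0)}"

definition wvals :: "('f \<Rightarrow> real) \<Rightarrow> ('m \<Rightarrow> ('o \<Rightarrow> 'f) \<Rightarrow> 'w \<Rightarrow> 'f) \<Rightarrow> 'm set \<Rightarrow> ('m \<Rightarrow> 'o \<Rightarrow> real) \<Rightarrow> ('o \<Rightarrow> 'w) \<Rightarrow> ('o \<Rightarrow> 'f) \<Rightarrow> real set" where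
  "wvals pn T Ms w iota f = {pn (T m f (iota x)) * w m x | x m. m \<in> Ms}"

definition wsemi :: "('a \<Rightarrow> 'f \<Rightarrow> real) \<Rightarrow> ('m \<Rightarrow> ('o \<Rightarrow> 'f) \<Rightarrow> 'w \<Rightarrow> 'f) \<Rightarrow> ('l \<Rightarrow> 'm set) \<Rightarrow> ('j \<Rightarrow> 'l \<Rightarrow> 'm \<Rightarrow> 'o \<Rightarrow> real) \<Rightarrow> ('o \<Rightarrow> 'w) \<Rightarrow> 'j \<times> 'l \<times> 'a \<Rightarrow> ('o \<Rightarrow> 'f) \<Rightarrow> real" where
  "wsemi pn T Ml nu iota = (\<lambda>(j,l,a) f. Sup (insert 0 (wvals (pn a) T (Ml l) (nu j l) iota f)))"

definition FVsp :: "'m set \<Rightarrow> 'm set \<Rightarrow> ('m \<Rightarrow> 'w set) \<Rightarrow> ('m \<Rightarrow> ('o \<Rightarrow> 'f) set) \<Rightarrow> ('m \<Rightarrow> ('o \<Rightarrow> 'f) \<Rightarrow> 'w \<Rightarrow> 'f::zero) \<Rightarrow>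
     'j set \<Rightarrow> 'l set \<Rightarrow> ('l \<Rightarrow> 'm set) \<Rightarrow> ('j \<Rightarrow> 'l \<Rightarrow> 'm \<Rightarrow> 'o \<Rightarrow> real) \<Rightarrow> ('o \<Rightarrow> 'w) \<Rightarrow> 'a set \<Rightarrow> ('a \<Rightarrow> 'f \<Rightarrow> real) \<Rightarrow> ('o \<Rightarrow> 'f) set" where
  "FVsp MM M0 om D T J L Ml nu iota P pn = {f \<in> Wsp MM M0 om D T.
      \<forall>j\<in>J. \<forall>l\<in>L. \<forall>a\<in>P. bdd_above (wvals (pn a) T (Ml l) (nu j l) iota f)}"

definition abs_convex :: "('k::real_normed_field \<Rightarrow> 'v::plus \<Rightarrow> 'v) \<Rightarrow> 'v set \<Rightarrow> bool" where
  "abs_convex sc K \<longleftrightarrow> (\<forall>x\<in>K. \<forall>y\<in>K. \<forall>a b. norm a + norm b \<le> 1 \<longrightarrow> sc a x + sc b y \<in> K)"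

definition supK :: "'v set \<Rightarrow> ('v \<Rightarrow> 'k::real_normed_field) \<Rightarrow> real" where
  "supK K phi = Sup (insert 0 ((\<lambda>f. norm (phi f)) ` K))"

end

theory Submission imports Defs begin

lemma openin_semtop:
  "openin (semtop q I X) S \<longleftrightarrow> S \<subseteq> X \<and> (\<forall>x\<in>S. \<exists>F e. finite F \<and> F \<subseteq> I \<and> 0 < e \<and>
       {y\<in>X. \<forall>i\<in>F. q i (y - x) < e} \<subseteq> S)"
  unfolding semtop_def topology_inverse'[OF istopology_semtop] by (rule refl)

lemma topspace_semtop: "topspace (semtop q I X) = X"
proof -
  have "openin (semtop q I X) X"
    unfolding openin_semtop by (auto intro!: exI[of _ "{}"] exI[of _ 1])
  moreover have "\<And>S. openin (semtop q I X) S \<Longrightarrow> S \<subseteq> X" by (simp add: openin_semtop)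
  ultimately show ?thesis unfolding topspace_def by blast
qed

lemma compact_bdd:
  assumes tri: "\<forall>x\<in>X. \<forall>y\<in>X. \<forall>z\<in>X. q i (z - x) \<le> q i (z - y) + q i (y - x)"
    and iI: "i \<in> I" and cK: "compactin (semtop q I X) K" and x0: "x0 \<in> X" and q0: "q i 0 = 0"
  shows "\<exists>B. \<forall>f\<in>K. q i (f - x0) \<le> B"
proof -
  define Bl where "Bl = (\<lambda>f. {y\<in>X. q i (y - f) < 1})"
  have KX: "K \<subseteq> X" using compactin_subset_topspace[OF cK] topspace_semtop by metis
  have op: "openin (semtop q I X) (Bl f)" if "f \<in> K" for f
    unfolding openin_semtop
  proof (intro conjI ballI)
    show "Bl f \<subseteq> X" unfolding Bl_def by auto
    fix y assume y: "y \<in> Bl f"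
    have sub: "{z\<in>X. \<forall>i\<in>{i}. q i (z - y) < 1 - q i (y - f)} \<subseteq> Bl f"
      proof (rule subsetI)
        fix z assume z: "z \<in> {z\<in>X. \<forall>i\<in>{i}. q i (z - y) < 1 - q i (y - f)}"
        then have zX: "z \<in> X" and zl: "q i (z - y) < 1 - q i (y - f)" by auto
        have yX: "y \<in> X" and fX: "f \<in> X" using y that KX unfolding Bl_def by auto
        have "q i (z - f) \<le> q i (z - y) + q i (y - f)"
          using tri zX yX fX by blast
        then show "z \<in> Bl f" using zX zl unfolding Bl_def by auto
      qed
    have pos: "0 < 1 - q i (y - f)" using y unfolding Bl_def by auto
    show "\<exists>F e. finite F \<and> F \<subseteq> I \<and> 0 < e \<and> {z\<in>X. \<forall>i\<in>F. q i (z - y) < e} \<subseteq> Bl f"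
      by (rule exI[of _ "{i}"], rule exI[of _ "1 - q i (y - f)"]) (use sub pos iI in blast)
  qed
  have cov: "K \<subseteq> \<Union> (Bl ` K)"
  proof
    fix f assume "f \<in> K"
    then have "f \<in> Bl f" using KX q0 unfolding Bl_def by auto
    then show "f \<in> \<Union> (Bl ` K)" using \<open>f \<in> K\<close> by auto
  qed
  obtain FF where FF: "finite FF" "FF \<subseteq> Bl ` K" "K \<subseteq> \<Union> FF"
  proof -
    have "\<forall>U\<in>Bl ` K. openin (semtop q I X) U" using op by blast
    moreover have "\<forall>U. (\<forall>U\<in>U. openin (semtop q I X) U) \<and> K \<subseteq> \<Union>U \<longrightarrow>
       (\<exists>F. finite F \<and> F \<subseteq> U \<and> K \<subseteq> \<Union>F)" using cK unfolding compactin_def by (rule conjunct2)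
    ultimately show ?thesis using cov that by meson
  qed
  obtain K0 where K0: "K0 \<subseteq> K" "finite K0" "FF = Bl ` K0"
    using finite_subset_image[OF FF(1,2)] by blast
  show ?thesis
  proof (intro exI ballI)
    fix f assume f: "f \<in> K"
    then obtain g where g: "g \<in> K0" "f \<in> Bl g" using FF K0 by auto
    have "q i (f - x0) \<le> q i (f - g) + q i (g - x0)"
    proof -
      have "f \<in> X" "g \<in> X" using f g K0 KX by auto
      then show ?thesis using tri x0 by blast
    qed
    also have "\<dots> \<le> 1 + (\<Sum>h\<in>K0. \<bar>q i (h - x0)\<bar>)"
    proof -
      have "q i (g - x0) \<le> \<bar>q i (g - x0)\<bar>" by simp
      also have "\<dots> \<le> (\<Sum>h\<in>K0. \<bar>q i (h - x0)\<bar>)"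
        by (rule member_le_sum) (use g K0 in auto)
      finally show ?thesis using g unfolding Bl_def by auto
    qed
    finally show "q i (f - x0) \<le> 1 + (\<Sum>h\<in>K0. \<bar>q i (h - x0)\<bar>)" .
  qed
qed

lemma kball:
  fixes w :: "(('o \<Rightarrow> 'k::real_normed_field) \<Rightarrow> 'k) \<Rightarrow> 'y"
  assumes cont: "continuous_map (semtop supK KK D) Y w" and opn: "openin Y {y. N y < 1}"
    and z: "0 \<in> D" "N (w 0) < 1"
  shows "\<exists>F e. finite F \<and> F \<subseteq> KK \<and> 0 < e \<and> (\<forall>\<psi>\<in>D. (\<forall>K\<in>F. supK K \<psi> < e) \<longrightarrow> N (w \<psi>) < 1)"
proof -
  let ?P = "{x \<in> topspace (semtop supK KK D). w x \<in> {y. N y < 1}}"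
  have "openin (semtop supK KK D) ?P" by (rule openin_continuous_map_preimage[OF cont opn])
  moreover have "0 \<in> ?P" using z by (simp add: topspace_semtop)
  ultimately obtain F e where Fe: "finite F" "F \<subseteq> KK" "0 < e" "{y\<in>D. \<forall>i\<in>F. supK i (y - 0) < e} \<subseteq> ?P"
    unfolding openin_semtop by blast
  show ?thesis
    using Fe by (intro exI[of _ F] exI[of _ e]) (auto simp: topspace_semtop)
qed

lemma kbound:
  fixes w :: "(('o \<Rightarrow> 'k::real_normed_field) \<Rightarrow> 'k) \<Rightarrow> 'y"
    and phs :: "'t \<Rightarrow> ('o \<Rightarrow> 'k) \<Rightarrow> 'k" and nv :: "'t \<Rightarrow> real"
  assumes cont: "continuous_map (semtop supK KK D) Y w" and opn: "openin Y {y. N y < 1}"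
    and z: "0 \<in> D" "N (w 0) < 1"
    and hom: "\<forall>\<psi>\<in>D. \<forall>c. fsc (*) c \<psi> \<in> D \<and> N (w (fsc (*) c \<psi>)) = norm c * N (w \<psi>)"
    and Kb: "\<forall>K\<in>KK. \<exists>B. \<forall>t\<in>T. \<forall>f\<in>K. norm (phs t f) * nv t \<le> B"
    and phD: "\<forall>t\<in>T. phs t \<in> D" and nvp: "\<forall>t\<in>T. 0 \<le> nv t"
  shows "\<exists>C. \<forall>t\<in>T. N (w (phs t)) * nv t \<le> C"
proof -
  obtain F e where Fe: "finite F" "F \<subseteq> KK" "0 < e"
    and ball: "\<forall>\<psi>\<in>D. (\<forall>K\<in>F. supK K \<psi> < e) \<longrightarrow> N (w \<psi>) < 1"
    using kball[OF cont opn z] by blast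
  have "\<forall>K\<in>F. \<exists>B. \<forall>t\<in>T. \<forall>f\<in>K. norm (phs t f) * nv t \<le> B" using Kb Fe(2) by blast
  then obtain BK where BK: "\<forall>K\<in>F. \<forall>t\<in>T. \<forall>f\<in>K. norm (phs t f) * nv t \<le> BK K"
    by metis
  define B where "B = (\<Sum>K\<in>F. \<bar>BK K\<bar>)"
  have B0: "0 \<le> B" unfolding B_def by (simp add: sum_nonneg)
  define c where "c = e / (B + 1)"
  have c0: "0 < c" unfolding c_def using Fe(3) B0 by simp
  have cB: "c * B < e" unfolding c_def using Fe(3) B0 by (simp add: field_simps)
  show ?thesis
  proof (intro exI ballI)
    fix t assume t: "t \<in> T"
    define \<psi> where "\<psi> = fsc (*) (of_real (c * nv t)) (phs t)"
    have \<psi>D: "\<psi> \<in> D" using hom phD t unfolding \<psi>_def by blast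
    have "supK K \<psi> < e" if K: "K \<in> F" for K
    proof -
      have "supK K \<psi> \<le> c * B" unfolding supK_def
      proof (rule cSup_least)
        fix r assume "r \<in> insert 0 ((\<lambda>f. norm (\<psi> f)) ` K)"
        then consider "r = 0" | f where "f \<in> K" "r = norm (\<psi> f)" by auto
        then show "r \<le> c * B"
        proof cases
          case 1 then show ?thesis using c0 B0 by simp
        next
          case 2
          have "r = c * (norm (phs t f) * nv t)"
            using 2 c0 nvp t unfolding \<psi>_def fsc_def by (simp add: norm_mult abs_mult)
          also have "\<dots> \<le> c * BK K" using BK K t 2 c0 by (simp add: mult_left_mono)
          also have "\<dots> \<le> c * B"
          proof -
            have "BK K \<le> \<bar>BK K\<bar>" by simp
            also have "\<dots> \<le> B" unfolding B_def by (rule member_le_sum) (use K Fe in auto)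
            finally show ?thesis using c0 by simp
          qed
          finally show ?thesis .
        qed
      qed simp
      then show ?thesis using cB by simp
    qed
    then have "N (w \<psi>) < 1" using ball \<psi>D by blast
    moreover have "N (w \<psi>) = c * nv t * N (w (phs t))"
    proof -
      have "0 \<le> c" "0 \<le> nv t" using c0 nvp t by auto
      then show ?thesis using hom phD t unfolding \<psi>_def by (simp add: norm_mult)
    qed
    ultimately have "c * (N (w (phs t)) * nv t) < 1" by (simp add: ac_simps)
    then show "N (w (phs t)) * nv t \<le> (B + 1) / e"
      using c0 Fe(3) B0 unfolding c_def by (simp add: field_simps)
  qed
qed

lemma kzero:
  fixes w :: "(('o \<Rightarrow> 'k::real_normed_field) \<Rightarrow> 'k) \<Rightarrow> 'y"
  assumes cont: "continuous_map (semtop supK KK D) Y w" and opn: "openin Y {y. N y < 1}"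
    and z: "0 \<in> D" "N (w 0) < 1"
    and hom: "\<forall>\<psi>\<in>D. \<forall>c. fsc (*) c \<psi> \<in> D \<and> N (w (fsc (*) c \<psi>)) = norm c * N (w \<psi>)"
    and phD: "ph \<in> D" and ph0: "\<forall>K\<in>KK. \<forall>f\<in>K. ph f = 0"
  shows "N (w ph) \<le> 0"
proof (rule ccontr)
  assume "\<not> N (w ph) \<le> 0"
  then have pos: "0 < N (w ph)" by simp
  obtain F e where Fe: "finite F" "F \<subseteq> KK" "0 < e"
    and ball: "\<forall>\<psi>\<in>D. (\<forall>K\<in>F. supK K \<psi> < e) \<longrightarrow> N (w \<psi>) < 1"
    using kball[OF cont opn z] by blast
  define c where "c = 1 / N (w ph)"
  define \<psi> where "\<psi> = fsc (*) (of_real c) ph"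
  have \<psi>D: "\<psi> \<in> D" using hom phD unfolding \<psi>_def by blast
  have "supK K \<psi> < e" if K: "K \<in> F" for K
  proof -
    have eq: "insert 0 ((\<lambda>f. norm (\<psi> f)) ` K) = {0}"
      using ph0 K Fe(2) unfolding \<psi>_def fsc_def by auto
    have "supK K \<psi> = 0" unfolding supK_def by (subst eq) simp
    then show ?thesis using Fe(3) by simp
  qed
  then have "N (w \<psi>) < 1" using ball \<psi>D by blast
  moreover have "N (w \<psi>) = 1"
    using hom phD pos unfolding \<psi>_def c_def by (simp add: norm_divide)
  ultimately show False by simp
qed

theorem proposition3p10:
  fixes sc :: "'k::real_normed_field \<Rightarrow> 'e::ab_group_add \<Rightarrow> 'e"
    and p :: "'a \<Rightarrow> 'e \<Rightarrow> real" and A :: "'a set"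
    and J :: "'j set" and L :: "'l set" and Ml :: "'l \<Rightarrow> 'm set"
    and nu :: "'j \<Rightarrow> 'l \<Rightarrow> 'm \<Rightarrow> 'o \<Rightarrow> real"
    and M0 Mr :: "'m set" and om :: "'m \<Rightarrow> 'w set" and iota :: "'o \<Rightarrow> 'w"
    and DK :: "'m \<Rightarrow> ('o \<Rightarrow> 'k) set" and TK :: "'m \<Rightarrow> ('o \<Rightarrow> 'k) \<Rightarrow> 'w \<Rightarrow> 'k"
    and DE :: "'m \<Rightarrow> ('o \<Rightarrow> 'e) set" and TE :: "'m \<Rightarrow> ('o \<Rightarrow> 'e) \<Rightarrow> 'w \<Rightarrow> 'e"
    and G :: "('e \<Rightarrow> 'k) set" and U :: "('m \<times> 'w) set"
    and Mtop MM :: "'m set" and Edual :: "('e \<Rightarrow> 'k) set"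
    and FVK :: "('o \<Rightarrow> 'k) set" and FVE :: "('o \<Rightarrow> 'e) set" and topK :: "('o \<Rightarrow> 'k) topology"
    and FVdual :: "(('o \<Rightarrow> 'k) \<Rightarrow> 'k) set" and kappa :: "(('o \<Rightarrow> 'k) \<Rightarrow> 'k) topology"
    and epsprod :: "((('o \<Rightarrow> 'k) \<Rightarrow> 'k) \<Rightarrow> 'e) set" and S :: "((('o \<Rightarrow> 'k) \<Rightarrow> 'k) \<Rightarrow> 'e) \<Rightarrow> 'o \<Rightarrow> 'e"
    and FVG :: "('m \<times> 'w \<Rightarrow> 'e) set" and R :: "('o \<Rightarrow> 'e) \<Rightarrow> 'm \<times> 'w \<Rightarrow> 'e"
  assumes "Mtop = \<Union> (Ml ` L)"
    and "MM = Mtop \<union> M0 \<union> Mr"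
    and "Edual = dualsp sc p A"
    and "FVK = FVsp MM M0 om DK TK J L Ml nu iota {()} (\<lambda>_. norm)"
    and "FVE = FVsp MM M0 om DE TE J L Ml nu iota A p"
    and "topK = semtop (wsemi (\<lambda>_. norm) TK Ml nu iota) (J \<times> L \<times> {()}) FVK"
    and "FVdual = {phi. lin_fun_on (fsc (*)) (*) FVK phi \<and> continuous_map topK euclidean phi}"
    and "kappa = semtop supK {K. K \<subseteq> FVK \<and> abs_convex (fsc (*)) K \<and> compactin topK K} FVdual"
    and "epsprod = {u. lin_fun_on (fsc (*)) sc FVdual u \<and> continuous_map kappa (semtop p A UNIV) u}"
    and "S = (\<lambda>u x. u (\<lambda>f. f x))"
    and "FVG = {f. f \<in> extensional U \<and> (\<forall>e\<in>G. \<exists>g\<in>FVK. \<forall>(m,x)\<in>U. TK m g x = e (f (m,x)))}"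
    and "R = (\<lambda>f. restrict (\<lambda>(m,x). TE m f x) U)"
    and E: "lcHs sc p A"
    \<comment> \<open>weights\<close>
    and J_ne: "J \<noteq> {}" and L_ne: "L \<noteq> {}" and Ml_ne: "\<forall>l\<in>L. Ml l \<noteq> {}"
    and nu_nonneg: "\<forall>j\<in>J. \<forall>l\<in>L. \<forall>m\<in>Ml l. \<forall>x. 0 \<le> nu j l m x"
    and nu_pos: "\<forall>x. \<forall>l\<in>L. \<exists>j\<in>J. \<forall>m\<in>Ml l. 0 < nu j l m x"
    \<comment> \<open>index sets pairwise disjoint\<close>
    and disj: "Mtop \<inter> M0 = {}" "Mtop \<inter> Mr = {}" "M0 \<inter> Mr = {}"
    \<comment> \<open>omega_m non-empty; Omega (embedded by iota) contained in omega_m for m in M_top\<close>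
    and om_ne: "\<forall>m\<in>MM. om m \<noteq> {}" and iota_inj: "inj iota"
    and Om_sub: "\<forall>m\<in>Mtop. range iota \<subseteq> om m"
    \<comment> \<open>the operators are linear\<close>
    and linK: "\<forall>m\<in>MM. lin_op (*) (DK m) (om m) (TK m)"
    and linE: "\<forall>m\<in>MM. lin_op sc (DE m) (om m) (TE m)"
    \<comment> \<open>FV(Omega) and FV(Omega,E) are dom-spaces\<close>
    and domK_dir: "directed_on (wsemi (\<lambda>_. norm) TK Ml nu iota) (J \<times> L \<times> {()}) FVK"
    and domK_delta: "\<forall>x. (\<lambda>f. f x) \<in> FVdual"
    and domE_dir: "directed_on (wsemi p TE Ml nu iota) (J \<times> L \<times> A) FVE"
    \<comment> \<open>the defining family is consistent\<close>
    and consistent: "\<forall>u\<in>epsprod. \<forall>m\<in>MM. \<forall>x\<in>om m.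
        S u \<in> DE m \<and> (\<lambda>f. TK m f x) \<in> FVdual \<and> TE m (S u) x = u (\<lambda>f. TK m f x)"
    \<comment> \<open>the defining family is strong\<close>
    and strong: "\<forall>e\<in>Edual. \<forall>f\<in>FVE. \<forall>m\<in>MM.
        e \<circ> f \<in> DK m \<and> (\<forall>x\<in>om m. TK m (e \<circ> f) x = e (TE m f x))"
    \<comment> \<open>G is a separating linear subspace of E'\<close>
    and G_sub: "G \<subseteq> Edual" and G_zero: "(\<lambda>_. 0) \<in> G"
    and G_lin: "\<forall>e1\<in>G. \<forall>e2\<in>G. \<forall>a b. fsc (*) a e1 + fsc (*) b e2 \<in> G"
    and G_sep: "\<forall>x. (\<forall>e\<in>G. e x = 0) \<longrightarrow> x = 0"
    \<comment> \<open>U is a set of uniqueness for FV(Omega)\<close>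
    and U_sub: "U \<subseteq> Sigma MM om"
    and U_cont: "\<forall>(m,x)\<in>U. (\<lambda>f. TK m f x) \<in> FVdual"
    and U_uniq: "\<forall>f\<in>FVK. (\<forall>(m,x)\<in>U. TK m f x = 0) \<longrightarrow> f = (\<lambda>_. 0)"
  shows "(\<forall>f\<in>S ` epsprod. R f \<in> FVG) \<and> inj_on R (S ` epsprod)"
proof -
  note defs = assms(1-12)
  define KK where "KK = {K. K \<subseteq> FVK \<and> abs_convex (fsc (*)) K \<and> compactin topK K}"
  have kap: "kappa = semtop supK KK FVdual" using defs(8) KK_def by simp
  define q where "q = (\<lambda>j l f. Sup (insert 0 {norm (TK m f (iota x)) * nu j l m x | x m. m \<in> Ml l}))"
  have Qeq: "wsemi (\<lambda>_. norm) TK Ml nu iota (j,l,()) = q j l" for j l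
    unfolding wsemi_def wvals_def q_def by simp
  have MlM: "m \<in> MM" "m \<in> Mtop" if "l \<in> L" "m \<in> Ml l" for l m using that defs(1,2) by auto
  have iom: "iota x \<in> om m" if "l \<in> L" "m \<in> Ml l" for l m x using Om_sub defs(1) that by blast
  have M0M: "m \<in> MM" if "m \<in> M0" for m using that defs(2) by auto
  have FVK_iff: "f \<in> FVK \<longleftrightarrow> (\<forall>m\<in>MM. f \<in> DK m) \<and> (\<forall>m\<in>M0. \<forall>x\<in>om m. TK m f x = 0) \<and>
      (\<forall>j\<in>J. \<forall>l\<in>L. bdd_above {norm (TK m f (iota x)) * nu j l m x | x m. m \<in> Ml l})" for f
    unfolding defs(4) FVsp_def Wsp_def wvals_def by auto
  have FVE_iff: "f \<in> FVE \<longleftrightarrow> (\<forall>m\<in>MM. f \<in> DE m) \<and> (\<forall>m\<in>M0. \<forall>x\<in>om m. TE m f x = 0) \<and>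
      (\<forall>j\<in>J. \<forall>l\<in>L. \<forall>a\<in>A. bdd_above {p a (TE m f (iota x)) * nu j l m x | x m. m \<in> Ml l})" for f
    unfolding defs(5) FVsp_def Wsp_def wvals_def by auto
  have qle: "norm (TK m f (iota x)) * nu j l m x \<le> q j l f"
    if "f \<in> FVK" "j \<in> J" "l \<in> L" "m \<in> Ml l" for f j l m x
  proof -
    have "bdd_above {norm (TK m f (iota x)) * nu j l m x | x m. m \<in> Ml l}" using that by (auto simp: FVK_iff)
    then show ?thesis unfolding q_def using that by (intro cSup_upper) auto
  qed
  have q0: "0 \<le> q j l f" if "f \<in> FVK" "j \<in> J" "l \<in> L" for f j l
  proof -
    have "bdd_above {norm (TK m f (iota x)) * nu j l m x | x m. m \<in> Ml l}" using that by (auto simp: FVK_iff)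
    then show ?thesis unfolding q_def by (intro cSup_upper) auto
  qed
  have qlub: "q j l f \<le> B" if "\<And>m x. m \<in> Ml l \<Longrightarrow> norm (TK m f (iota x)) * nu j l m x \<le> B" "0 \<le> B" for j l f B
    unfolding q_def by (rule cSup_least) (use that in auto)
  have linK': "fsc (*) a f + fsc (*) b g \<in> DK m \<and> (\<forall>y\<in>om m. TK m (fsc (*) a f + fsc (*) b g) y = a * TK m f y + b * TK m g y)"
    if "m \<in> MM" "f \<in> DK m" "g \<in> DK m" for m f g a b
    using linK that unfolding lin_op_def by blast
  have lin: "fsc (*) a f + fsc (*) b g \<in> FVK \<and> (\<forall>j\<in>J. \<forall>l\<in>L. q j l (fsc (*) a f + fsc (*) b g) \<le> norm a * q j l f + norm b * q j l g)"
    if f: "f \<in> FVK" and g: "g \<in> FVK" for f g a b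
  proof -
    define h where "h = fsc (*) a f + fsc (*) b g"
    have hD: "\<forall>m\<in>MM. h \<in> DK m \<and> (\<forall>y\<in>om m. TK m h y = a * TK m f y + b * TK m g y)"
      using linK' f g FVK_iff unfolding h_def by blast
    have bnd: "norm (TK m h (iota x)) * nu j l m x \<le> norm a * q j l f + norm b * q j l g"
      if "j \<in> J" "l \<in> L" "m \<in> Ml l" for j l m x
    proof -
      have nn: "0 \<le> nu j l m x" using nu_nonneg that by blast
      have "norm (TK m h (iota x)) * nu j l m x = norm (a * TK m f (iota x) + b * TK m g (iota x)) * nu j l m x"
        using hD MlM iom that by auto
      also have "\<dots> \<le> (norm a * norm (TK m f (iota x)) + norm b * norm (TK m g (iota x))) * nu j l m x"
        by (rule mult_right_mono[OF _ nn]) (metis norm_mult norm_triangle_ineq)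
      also have "\<dots> = norm a * (norm (TK m f (iota x)) * nu j l m x) + norm b * (norm (TK m g (iota x)) * nu j l m x)"
        by (simp add: algebra_simps)
      also have "\<dots> \<le> norm a * q j l f + norm b * q j l g"
        using qle[OF f that] qle[OF g that] by (intro add_mono mult_left_mono) auto
      finally show ?thesis .
    qed
    have "h \<in> FVK"
      unfolding FVK_iff
    proof (intro conjI ballI)
      show "h \<in> DK m" if "m \<in> MM" for m using hD that by blast
      show "TK m h x = 0" if "m \<in> M0" "x \<in> om m" for m x
        using hD M0M[OF that(1)] that f g FVK_iff by simp
      show "bdd_above {norm (TK m h (iota x)) * nu j l m x | x m. m \<in> Ml l}" if "j \<in> J" "l \<in> L" for j l
        by (rule bdd_aboveI[where M="norm a * q j l f + norm b * q j l g"]) (use bnd that in auto)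
    qed
    moreover have "q j l h \<le> norm a * q j l f + norm b * q j l g" if "j \<in> J" "l \<in> L" for j l
      by (rule qlub) (use bnd that q0 f g in \<open>auto intro!: add_nonneg_nonneg\<close>)
    ultimately show ?thesis unfolding h_def by blast
  qed
  have diffeq: "f - g = fsc (*) 1 f + fsc (*) (-1) g" for f g :: "'o \<Rightarrow> 'k"
    by (simp add: fun_eq_iff fsc_def)
  have diff: "f - g \<in> FVK" if "f \<in> FVK" "g \<in> FVK" for f g
    using lin[OF that, of 1 "-1"] diffeq by simp
  have TKdiff: "TK m (f - g) y = TK m f y - TK m g y" if "m \<in> MM" "f \<in> DK m" "g \<in> DK m" "y \<in> om m" for m f g y
    using linK'[OF that(1-3), of 1 "-1"] that(4) diffeq by simp
  have TK0: "0 \<in> DK m \<and> TK m 0 y = 0" if "m \<in> MM" "y \<in> om m" for m y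
  proof -
    have z: "(0::'o\<Rightarrow>'k) \<in> DK m" using linK that unfolding lin_op_def zero_fun_def by auto
    have "fsc (*) 0 0 + fsc (*) 0 0 = (0::'o\<Rightarrow>'k)" by (simp add: fun_eq_iff fsc_def)
    then show ?thesis using linK'[OF that(1) z z, of 0 0] that z by simp
  qed
  have zFVK: "(0::'o\<Rightarrow>'k) \<in> FVK"
    unfolding FVK_iff
  proof (intro conjI ballI)
    show "0 \<in> DK m" if "m \<in> MM" for m using TK0 that om_ne by blast
    show "TK m 0 x = 0" if "m \<in> M0" "x \<in> om m" for m x using TK0 M0M that by blast
    show "bdd_above {norm (TK m 0 (iota x)) * nu j l m x | x m. m \<in> Ml l}" if "j \<in> J" "l \<in> L" for j l
      by (rule bdd_aboveI[where M=0]) (use TK0 MlM iom that in auto)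
  qed
  have qzero: "q j l 0 = 0" if "j \<in> J" "l \<in> L" for j l
    using qlub[of l 0 j 0] q0[OF zFVK that] TK0 MlM iom that by force
  have tri: "\<forall>x\<in>FVK. \<forall>y\<in>FVK. \<forall>z\<in>FVK. wsemi (\<lambda>_. norm) TK Ml nu iota (j,l,()) (z - x)
     \<le> wsemi (\<lambda>_. norm) TK Ml nu iota (j,l,()) (z - y) + wsemi (\<lambda>_. norm) TK Ml nu iota (j,l,()) (y - x)"
    if "j \<in> J" "l \<in> L" for j l
  proof (intro ballI)
    fix x y z assume xyz: "x \<in> FVK" "y \<in> FVK" "z \<in> FVK"
    have "z - x = fsc (*) 1 (z - y) + fsc (*) 1 (y - x)" by (simp add: fun_eq_iff fsc_def)
    then show "wsemi (\<lambda>_. norm) TK Ml nu iota (j,l,()) (z - x)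
     \<le> wsemi (\<lambda>_. norm) TK Ml nu iota (j,l,()) (z - y) + wsemi (\<lambda>_. norm) TK Ml nu iota (j,l,()) (y - x)"
      using lin[OF diff[OF xyz(3,2)] diff[OF xyz(2,1)], of 1 1] that unfolding Qeq by simp
  qed
  have cbdd: "\<exists>B. \<forall>f\<in>K. q j l f \<le> B" if "K \<in> KK" "j \<in> J" "l \<in> L" for K j l
  proof -
    have "compactin (semtop (wsemi (\<lambda>_. norm) TK Ml nu iota) (J \<times> L \<times> {()}) FVK) K"
      using that(1) unfolding KK_def defs(6) by blast
    from compact_bdd[OF tri[OF that(2,3)] _ this zFVK] that(2,3) qzero[OF that(2,3)]
    show ?thesis unfolding Qeq by simp
  qed
  have zD: "(0::('o\<Rightarrow>'k)\<Rightarrow>'k) \<in> FVdual"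
    unfolding defs(7) lin_fun_on_def zero_fun_def by simp
  have scD: "fsc (*) c \<psi> \<in> FVdual" if "\<psi> \<in> FVdual" for c \<psi>
  proof -
    have l: "lin_fun_on (fsc (*)) (*) FVK \<psi>" and ct: "continuous_map topK euclidean \<psi>"
      using that defs(7) by auto
    have "lin_fun_on (fsc (*)) (*) FVK (fsc (*) c \<psi>)"
      using l unfolding lin_fun_on_def fsc_def by (simp add: algebra_simps)
    moreover have "continuous_map topK euclidean ((\<lambda>z. c * z) \<circ> \<psi>)"
      by (rule continuous_map_compose[OF ct]) (simp add: continuous_intros)
    moreover have "(\<lambda>z. c * z) \<circ> \<psi> = fsc (*) c \<psi>" by (simp add: fun_eq_iff fsc_def)
    ultimately show ?thesis using defs(7) by simp
  qed
  have vs: "Vector_Spaces.vector_space sc" using E unfolding lcHs_def by blast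
  have sc0: "sc 0 y = 0" for y
  proof -
    have "sc (0 + 0) y = sc 0 y + sc 0 y" using vs unfolding vector_space_def by blast
    then show ?thesis by simp
  qed
  have psn: "0 \<le> p a y" "p a (sc c y) = norm c * p a y" "p a (y + z) \<le> p a y + p a z" if "a \<in> A" for a y z c
    using E that unfolding lcHs_def is_seminorm_def by blast+
  have p0: "p a 0 = 0" if "a \<in> A" for a using psn(2)[OF that, of 0 0] sc0 by simp
  have popen: "openin (semtop p A UNIV) {y. p a y < 1}" if a: "a \<in> A" for a
    unfolding openin_semtop
  proof (intro conjI ballI)
    fix y assume y: "y \<in> {y. p a y < 1}"
    have sub: "{z\<in>UNIV. \<forall>i\<in>{a}. p i (z - y) < 1 - p a y} \<subseteq> {y. p a y < 1}"
    proof
      fix z assume "z \<in> {z\<in>UNIV. \<forall>i\<in>{a}. p i (z - y) < 1 - p a y}"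
      then have "p a (z - y) < 1 - p a y" by simp
      moreover have "p a z \<le> p a (z - y) + p a y" using psn(3)[OF a, of "z - y" y] by simp
      ultimately show "z \<in> {y. p a y < 1}" by simp
    qed
    have pos: "0 < 1 - p a y" using y by simp
    show "\<exists>F e. finite F \<and> F \<subseteq> A \<and> 0 < e \<and> {z\<in>UNIV. \<forall>i\<in>F. p i (z - y) < e} \<subseteq> {y. p a y < 1}"
      by (rule exI[of _ "{a}"], rule exI[of _ "1 - p a y"]) (use sub pos a in blast)
  qed simp
  have eprops: "e (sc c y) = c * e y" "e (y - z) = e y - e z" "e 0 = 0"
      "continuous_map (semtop p A UNIV) euclidean e"
    if "e \<in> Edual" for e c y z
  proof -
    have "Vector_Spaces.linear sc (*) e" and ct: "continuous_map (semtop p A UNIV) euclidean e"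
      using that defs(3) unfolding dualsp_def by auto
    then have mh: "module_hom sc (*) e" unfolding Vector_Spaces.linear_def by blast
    show "e (sc c y) = c * e y" by (rule module_hom.scale[OF mh])
    show "e (y - z) = e y - e z" by (rule module_hom.diff[OF mh])
    show "e 0 = 0" by (rule module_hom.zero[OF mh])
    show "continuous_map (semtop p A UNIV) euclidean e" by (rule ct)
  qed
  have ball_open: "openin euclidean {y::'k. norm y < 1}"
  proof -
    have "{y::'k. norm y < 1} = ball 0 1" by (auto simp: dist_norm)
    then show ?thesis by simp
  qed
  have uprops: "S u \<in> FVE \<and> (\<forall>e\<in>G. e \<circ> S u \<in> FVK)" if u: "u \<in> epsprod" for u
  proof -
    have ul: "lin_fun_on (fsc (*)) sc FVdual u" and uc: "continuous_map kappa (semtop p A UNIV) u"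
      using u defs(9) by auto
    have uc': "continuous_map (semtop supK KK FVdual) (semtop p A UNIV) u" using uc kap by simp
    have "fsc (*) 0 0 + fsc (*) 0 0 = (0::('o\<Rightarrow>'k)\<Rightarrow>'k)" by (simp add: fun_eq_iff fsc_def)
    then have u0: "u 0 = 0" using ul zD sc0 unfolding lin_fun_on_def by (metis add_0)
    then have u0': "u (\<lambda>_. 0) = 0" by (simp add: zero_fun_def)
    have usc: "u (fsc (*) c \<psi>) = sc c (u \<psi>)" if "\<psi> \<in> FVdual" for c \<psi>
    proof -
      have "fsc (*) c \<psi> + fsc (*) 0 \<psi> = fsc (*) c \<psi>" by (simp add: fun_eq_iff fsc_def)
      then show ?thesis using ul that sc0 unfolding lin_fun_on_def by (metis add_0_right)
    qed
    have phD: "(\<lambda>f. TK m f x) \<in> FVdual" and TEu: "TE m (S u) x = u (\<lambda>f. TK m f x)" and SuD: "S u \<in> DE m"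
      if "m \<in> MM" "x \<in> om m" for m x using consistent u that by blast+
    have homp: "\<forall>\<psi>\<in>FVdual. \<forall>c. fsc (*) c \<psi> \<in> FVdual \<and> p a (u (fsc (*) c \<psi>)) = norm c * p a (u \<psi>)"
      if "a \<in> A" for a using scD usc psn(2)[OF that] by simp
    have Kb: "\<forall>K\<in>KK. \<exists>B. \<forall>t\<in>Ml l \<times> UNIV. \<forall>f\<in>K. norm ((\<lambda>(m,x). \<lambda>f. TK m f (iota x)) t f) * (\<lambda>(m,x). nu j l m x) t \<le> B"
      if jl: "j \<in> J" "l \<in> L" for j l
    proof
      fix K assume K: "K \<in> KK"
      obtain B where B: "\<forall>f\<in>K. q j l f \<le> B" using cbdd[OF K jl] by blast
      have KF: "K \<subseteq> FVK" using K KK_def by blast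
      show "\<exists>B. \<forall>t\<in>Ml l \<times> UNIV. \<forall>f\<in>K. norm ((\<lambda>(m,x). \<lambda>f. TK m f (iota x)) t f) * (\<lambda>(m,x). nu j l m x) t \<le> B"
      proof (intro exI[of _ B] ballI)
        fix t f assume t: "t \<in> Ml l \<times> (UNIV::'o set)" and f: "f \<in> K"
        obtain m x where mx: "t = (m, x)" "m \<in> Ml l" using t by auto
        have "norm (TK m f (iota x)) * nu j l m x \<le> q j l f" using qle[OF _ jl mx(2)] f KF by blast
        also have "\<dots> \<le> B" using B f by blast
        finally show "norm ((\<lambda>(m,x). \<lambda>f. TK m f (iota x)) t f) * (\<lambda>(m,x). nu j l m x) t \<le> B"
          using mx by simp
      qed
    qed
    have phD': "\<forall>t\<in>Ml l \<times> UNIV. (\<lambda>(m,x). \<lambda>f. TK m f (iota x)) t \<in> FVdual" if "l \<in> L" for l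
      using phD MlM iom that by auto
    have nvp: "\<forall>t\<in>Ml l \<times> UNIV. 0 \<le> (\<lambda>(m,x). nu j l m x) t" if "j \<in> J" "l \<in> L" for j l
      using nu_nonneg that by auto
    have SuFVE: "S u \<in> FVE"
      unfolding FVE_iff
    proof (intro conjI ballI)
      show "S u \<in> DE m" if "m \<in> MM" for m using SuD om_ne that by blast
      show "TE m (S u) x = 0" if m: "m \<in> M0" and x: "x \<in> om m" for m x
      proof -
        have ph0: "\<forall>K\<in>KK. \<forall>f\<in>K. (\<lambda>f. TK m f x) f = 0"
        proof (intro ballI)
          fix K f assume "K \<in> KK" "f \<in> K"
          then have "f \<in> FVK" by (auto simp: KK_def)
          then have "\<forall>m\<in>M0. \<forall>x\<in>om m. TK m f x = 0" by (simp add: FVK_iff)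
          then show "(\<lambda>f. TK m f x) f = 0" using m x by simp
        qed
        have "p a (u (\<lambda>f. TK m f x)) \<le> 0" if a: "a \<in> A" for a
          by (rule kzero[OF uc' popen[OF a] zD _ homp[OF a] phD[OF M0M[OF m] x] ph0])
             (simp add: u0 u0' p0[OF a])
        then have "\<forall>a\<in>A. p a (u (\<lambda>f. TK m f x)) = 0" using psn(1) by (meson order_antisym)
        then have "u (\<lambda>f. TK m f x) = 0" using E unfolding lcHs_def by blast
        then show ?thesis using TEu[OF M0M[OF m] x] by simp
      qed
      show "bdd_above {p a (TE m (S u) (iota x)) * nu j l m x | x m. m \<in> Ml l}"
        if jla: "j \<in> J" "l \<in> L" "a \<in> A" for j l a
      proof -
        obtain C where C: "\<forall>t\<in>Ml l \<times> UNIV. p a (u ((\<lambda>(m,x). \<lambda>f. TK m f (iota x)) t)) * (\<lambda>(m,x). nu j l m x) t \<le> C"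
          using kbound[OF uc' popen[OF jla(3)] zD _ homp[OF jla(3)] Kb[OF jla(1,2)] phD'[OF jla(2)] nvp[OF jla(1,2)]]
            u0 u0' p0[OF jla(3)] by auto
        show ?thesis
        proof (rule bdd_aboveI[where M=C])
          fix r assume "r \<in> {p a (TE m (S u) (iota x)) * nu j l m x | x m. m \<in> Ml l}"
          then obtain x m where r: "r = p a (TE m (S u) (iota x)) * nu j l m x" "m \<in> Ml l" by blast
          have "TE m (S u) (iota x) = u (\<lambda>f. TK m f (iota x))"
            using TEu[OF MlM(1)[OF jla(2) r(2)] iom[OF jla(2) r(2)]] .
          then show "r \<le> C" using C r by force
        qed
      qed
    qed
    have "e \<circ> S u \<in> FVK" if e: "e \<in> G" for e
    proof -
      have eE: "e \<in> Edual" using e G_sub by blast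
      have st: "e \<circ> S u \<in> DK m \<and> (\<forall>x\<in>om m. TK m (e \<circ> S u) x = e (TE m (S u) x))" if "m \<in> MM" for m
        using strong eE SuFVE that by blast
      have ec: "continuous_map (semtop supK KK FVdual) euclidean (e \<circ> u)"
        by (rule continuous_map_compose[OF uc' eprops(4)[OF eE]])
      have home: "\<forall>\<psi>\<in>FVdual. \<forall>c. fsc (*) c \<psi> \<in> FVdual \<and> norm ((e \<circ> u) (fsc (*) c \<psi>)) = norm c * norm ((e \<circ> u) \<psi>)"
        using scD usc eprops(1)[OF eE] by (simp add: norm_mult)
      show ?thesis
        unfolding FVK_iff
      proof (intro conjI ballI)
        show "e \<circ> S u \<in> DK m" if "m \<in> MM" for m using st that by blast
        show "TK m (e \<circ> S u) x = 0" if m: "m \<in> M0" and x: "x \<in> om m" for m x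
          using st[OF M0M[OF m]] x SuFVE m eprops(3)[OF eE] unfolding FVE_iff by simp
        show "bdd_above {norm (TK m (e \<circ> S u) (iota x)) * nu j l m x | x m. m \<in> Ml l}"
          if jl: "j \<in> J" "l \<in> L" for j l
        proof -
          obtain C where C: "\<forall>t\<in>Ml l \<times> UNIV. norm ((e \<circ> u) ((\<lambda>(m,x). \<lambda>f. TK m f (iota x)) t)) * (\<lambda>(m,x). nu j l m x) t \<le> C"
            using kbound[OF ec ball_open zD _ home Kb[OF jl(1,2)] phD'[OF jl(2)] nvp[OF jl(1,2)]]
              u0 u0' eprops(3)[OF eE] by auto
          show ?thesis
          proof (rule bdd_aboveI[where M=C])
            fix r assume "r \<in> {norm (TK m (e \<circ> S u) (iota x)) * nu j l m x | x m. m \<in> Ml l}"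
            then obtain x m where r: "r = norm (TK m (e \<circ> S u) (iota x)) * nu j l m x" "m \<in> Ml l" by blast
            have "TK m (e \<circ> S u) (iota x) = e (u (\<lambda>f. TK m f (iota x)))"
              using TEu[OF MlM(1)[OF jl(2) r(2)] iom[OF jl(2) r(2)]]
                st[OF MlM(1)[OF jl(2) r(2)]] iom[OF jl(2) r(2)] by simp
            then show "r \<le> C" using C r by force
          qed
        qed
      qed
    qed
    then show ?thesis using SuFVE by blast
  qed
  have part1: "R f \<in> FVG" if fS: "f \<in> S ` epsprod" for f
  proof -
    obtain u where u: "u \<in> epsprod" "f = S u" using fS by blast
    show ?thesis
      unfolding defs(11)
    proof (intro CollectI conjI ballI)
      show "R f \<in> extensional U" unfolding defs(12) by simp
      fix e assume e: "e \<in> G"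
      have eE: "e \<in> Edual" using e G_sub by blast
      have g: "e \<circ> S u \<in> FVK" using uprops[OF u(1)] e by blast
      have "\<forall>(m,x)\<in>U. TK m (e \<circ> S u) x = e (R f (m,x))"
        using strong eE uprops[OF u(1)] U_sub u(2) unfolding defs(12) by auto
      then show "\<exists>g\<in>FVK. \<forall>(m,x)\<in>U. TK m g x = e (R f (m,x))" using g by blast
    qed
  qed
  have part2: "inj_on R (S ` epsprod)"
  proof (rule inj_onI)
    fix f1 f2 assume f1: "f1 \<in> S ` epsprod" and f2: "f2 \<in> S ` epsprod" and eq: "R f1 = R f2"
    obtain u where u: "u \<in> epsprod" "f1 = S u" using f1 by blast
    obtain v where v: "v \<in> epsprod" "f2 = S v" using f2 by blast
    show "f1 = f2"
    proof
      fix o0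
      have "\<forall>e\<in>G. e (f1 o0 - f2 o0) = 0"
      proof
        fix e assume e: "e \<in> G"
        have eE: "e \<in> Edual" using e G_sub by blast
        have g1: "e \<circ> f1 \<in> FVK" and g2: "e \<circ> f2 \<in> FVK" using uprops u v e by blast+
        have f1E: "f1 \<in> FVE" and f2E: "f2 \<in> FVE" using uprops u v by blast+
        have "\<forall>(m,x)\<in>U. TK m ((e \<circ> f1) - (e \<circ> f2)) x = 0"
        proof (intro ballI, clarify)
          fix m x assume mx: "(m, x) \<in> U"
          then have m: "m \<in> MM" and x: "x \<in> om m" using U_sub by auto
          have s1: "e \<circ> f1 \<in> DK m" "TK m (e \<circ> f1) x = e (TE m f1 x)" using strong eE f1E m x by blast+
          have s2: "e \<circ> f2 \<in> DK m" "TK m (e \<circ> f2) x = e (TE m f2 x)" using strong eE f2E m x by blast+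
          have "R f1 (m,x) = R f2 (m,x)" using eq by simp
          then have "TE m f1 x = TE m f2 x" using mx unfolding defs(12) by simp
          then show "TK m ((e \<circ> f1) - (e \<circ> f2)) x = 0" using TKdiff[OF m s1(1) s2(1) x] s1 s2 by simp
        qed
        then have "(e \<circ> f1) - (e \<circ> f2) = (\<lambda>_. 0)" using U_uniq diff[OF g1 g2] by blast
        then have "e (f1 o0) - e (f2 o0) = 0" by (metis comp_apply minus_apply)
        then show "e (f1 o0 - f2 o0) = 0" using eprops(2)[OF eE] by simp
      qed
      then have "f1 o0 - f2 o0 = 0" using G_sep by blast
      then show "f1 o0 = f2 o0" by simp
    qed
  qed
  show ?thesis using part1 part2 by blast
qed

end
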